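(* Let $G$ be a connected graph with vertices $v_1,\dots,v_n$ and let $\{v_i,v_j\}$ be a pair of vertices of order $h$, with associated vector $S=(s_1,\dots,s_n)^t$ (so $M(G)S=hE_{ij}$). Then $s_i=\min\{s_\ell:\ell=1,\dots,n\}$ and $s_j=\max\{s_\ell:\ell=1,\dots,n\}$.
   Context: Graphs are finite, connected, may have multiple edges, no loops. Let $c_{ij}$ ($i\neq j$) be the number of edges joining $v_i,v_j$, $c_{ii}=-\sum_{j\ne i}c_{ij}$, $M(G)=(c_{ij})$, and $E_{ij}=e_i-e_j\in\mathbb{Z}^n$. For an integer $h>0$, the pair $\{v_i,v_j\}$ has order $h$ if there exists $S=(s_1,\dots,s_n)^t\in\mathbb{Z}^n$ with $M(G)S=hE_{ij}$ and $\gcd(s_1-s_n,\dots,s_{n-1}-s_n)=1$; such an $S$ is the associated vector. *)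

theory Defs
  imports Main
begin

text \<open>A multigraph on vertices v_1..v_n is given by edge multiplicities
  c :: nat => nat => nat (c i j = number of edges joining v_i and v_j).\<close>

definition multigraph :: "nat \<Rightarrow> (nat \<Rightarrow> nat \<Rightarrow> nat) \<Rightarrow> bool" where
  "multigraph n c \<longleftrightarrow> (\<forall>i\<in>{1..n}. \<forall>j\<in>{1..n}. c i j = c j i) \<and> (\<forall>i\<in>{1..n}. c i i = 0)"

definition adj :: "nat \<Rightarrow> (nat \<Rightarrow> nat \<Rightarrow> nat) \<Rightarrow> nat \<Rightarrow> nat \<Rightarrow> bool" where
  "adj n c i j \<longleftrightarrow> i \<in> {1..n} \<and> j \<in> {1..n} \<and> c i j > 0"

definition graph_connected :: "nat \<Rightarrow> (nat \<Rightarrow> nat \<Rightarrow> nat) \<Rightarrow> bool" where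
  "graph_connected n c \<longleftrightarrow> (\<forall>i\<in>{1..n}. \<forall>j\<in>{1..n}. (adj n c)\<^sup>*\<^sup>* i j)"

definition Mmat :: "nat \<Rightarrow> (nat \<Rightarrow> nat \<Rightarrow> nat) \<Rightarrow> nat \<Rightarrow> nat \<Rightarrow> int" where
  "Mmat n c i j = (if i = j then - (\<Sum>k\<in>{1..n} - {i}. int (c i k)) else int (c i j))"

definition Evec :: "nat \<Rightarrow> nat \<Rightarrow> nat \<Rightarrow> int" where
  "Evec i j k = (if k = i then 1 else 0) - (if k = j then 1 else 0)"

definition assoc_vector :: "nat \<Rightarrow> (nat \<Rightarrow> nat \<Rightarrow> nat) \<Rightarrow> nat \<Rightarrow> nat \<Rightarrow> int \<Rightarrow> (nat \<Rightarrow> int) \<Rightarrow> bool" where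
  "assoc_vector n c i j h S \<longleftrightarrow> h > 0 \<and>
     (\<forall>k\<in>{1..n}. (\<Sum>l=1..n. Mmat n c k l * S l) = h * Evec i j k) \<and>
     Gcd ((\<lambda>k. S k - S n) ` {1..<n}) = 1"

definition pair_has_order :: "nat \<Rightarrow> (nat \<Rightarrow> nat \<Rightarrow> nat) \<Rightarrow> nat \<Rightarrow> nat \<Rightarrow> int \<Rightarrow> bool" where
  "pair_has_order n c i j h \<longleftrightarrow> (\<exists>S. assoc_vector n c i j h S)"

end

theory Submission
  imports Defs
begin

lemma row_sum:
  assumes "k \<in> {1..n}"
  shows "(\<Sum>l=1..n. Mmat n c k l * S l) = (\<Sum>l\<in>{1..n}-{k}. int (c k l) * (S l - S k))"
proof -
  have "(\<Sum>l=1..n. Mmat n c k l * S l) = Mmat n c k k * S k + (\<Sum>l\<in>{1..n}-{k}. Mmat n c k l * S l)"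
    using assms by (simp add: sum.remove)
  also have "(\<Sum>l\<in>{1..n}-{k}. Mmat n c k l * S l) = (\<Sum>l\<in>{1..n}-{k}. int (c k l) * S l)"
    by (rule sum.cong) (auto simp: Mmat_def)
  also have "Mmat n c k k * S k = - (\<Sum>l\<in>{1..n}-{k}. int (c k l) * S k)"
    by (simp add: Mmat_def sum_distrib_right)
  finally show ?thesis by (simp add: sum_subtractf algebra_simps)
qed

lemma min_lemma:
  fixes S :: "nat \<Rightarrow> int" and h :: int
  assumes mg: "multigraph n c" and conn: "graph_connected n c"
    and ii: "i \<in> {1..n}" and jj: "j \<in> {1..n}" and ij: "i \<noteq> j" and hp: "h > 0"
    and eq: "\<forall>k\<in>{1..n}. (\<Sum>l=1..n. Mmat n c k l * S l) = h * Evec i j k"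
  shows "\<forall>k\<in>{1..n}. S i \<le> S k"
proof -
  have fin: "finite (S ` {1..n})" and ne: "S ` {1..n} \<noteq> {}" using ii by auto
  obtain m0 where m0: "m0 \<in> {1..n}" "S m0 = Min (S ` {1..n})"
    using Min_in[OF fin ne] by auto
  have mle: "\<forall>k\<in>{1..n}. S m0 \<le> S k" using m0 fin by auto
  define P where "P = {k\<in>{1..n}. S k = S m0}"
  have key: "k \<noteq> j \<and> (\<forall>l. adj n c k l \<longrightarrow> l \<in> P)" if kP: "k \<in> P" and ki: "k \<noteq> i" for k
  proof -
    have kn: "k \<in> {1..n}" and Sk: "S k = S m0" using kP by (auto simp: P_def)
    have s: "(\<Sum>l\<in>{1..n}-{k}. int (c k l) * (S l - S k)) = h * Evec i j k"
      using eq kn row_sum[OF kn, of c S] by simp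
    have nn: "\<forall>l\<in>{1..n}-{k}. 0 \<le> int (c k l) * (S l - S k)"
      using mle Sk by auto
    hence ge: "0 \<le> (\<Sum>l\<in>{1..n}-{k}. int (c k l) * (S l - S k))" by (metis (no_types, lifting) sum_nonneg)
    have kj: "k \<noteq> j"
    proof
      assume "k = j"
      hence "Evec i j k = -1" using ij by (simp add: Evec_def)
      thus False using s ge hp by simp
    qed
    hence "Evec i j k = 0" using ki by (simp add: Evec_def)
    hence "(\<Sum>l\<in>{1..n}-{k}. int (c k l) * (S l - S k)) = 0" using s by simp
    hence z: "\<forall>l\<in>{1..n}-{k}. int (c k l) * (S l - S k) = 0"
      using sum_nonneg_eq_0_iff[of "{1..n}-{k}" "\<lambda>l. int (c k l) * (S l - S k)"] nn by simp
    have "l \<in> P" if "adj n c k l" for l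
    proof -
      have l: "l \<in> {1..n}" "c k l > 0" using that by (auto simp: adj_def)
      have "l \<noteq> k" using l mg kn by (auto simp: multigraph_def)
      hence "int (c k l) * (S l - S k) = 0" using z l by blast
      hence "S l = S k" using l(2) by simp
      thus ?thesis using l Sk by (simp add: P_def)
    qed
    thus ?thesis using kj by blast
  qed
  have "i \<in> P"
  proof (rule ccontr)
    assume niP: "i \<notin> P"
    have "\<And>b. (adj n c)\<^sup>*\<^sup>* m0 b \<Longrightarrow> b \<in> P"
    proof -
      fix b assume "(adj n c)\<^sup>*\<^sup>* m0 b"
      thus "b \<in> P"
      proof (induction rule: rtranclp_induct)
        case base thus ?case using m0 by (simp add: P_def)
      next
        case (step a b)
        have "a \<noteq> i" using step niP by auto
        thus ?case using key step by blast
      qed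
    qed
    hence "j \<in> P" using conn m0 jj by (auto simp: graph_connected_def)
    thus False using key ij by blast
  qed
  thus ?thesis using mle by (simp add: P_def)
qed

theorem lemma1p1:
  fixes n :: nat and c :: "nat \<Rightarrow> nat \<Rightarrow> nat" and i j :: nat and h :: int
    and S :: "nat \<Rightarrow> int"
  assumes "multigraph n c" and "graph_connected n c"
    and "i \<in> {1..n}" and "j \<in> {1..n}" and "i \<noteq> j"
    and "assoc_vector n c i j h S"
  shows "S i = Min (S ` {1..n}) \<and> S j = Max (S ` {1..n})"
proof -
  have hp: "h > 0" and eq: "\<forall>k\<in>{1..n}. (\<Sum>l=1..n. Mmat n c k l * S l) = h * Evec i j k"
    using assms(6) by (auto simp: assoc_vector_def)
  have a: "\<forall>k\<in>{1..n}. S i \<le> S k"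
    using min_lemma[OF assms(1-5) hp eq] .
  have eq2: "\<forall>k\<in>{1..n}. (\<Sum>l=1..n. Mmat n c k l * (- S l)) = h * Evec j i k"
  proof
    fix k assume k: "k \<in> {1..n}"
    have "(\<Sum>l=1..n. Mmat n c k l * (- S l)) = - (\<Sum>l=1..n. Mmat n c k l * S l)"
      by (simp add: sum_negf)
    also have "\<dots> = h * Evec j i k" using eq k by (simp add: Evec_def)
    finally show "(\<Sum>l=1..n. Mmat n c k l * (- S l)) = h * Evec j i k" .
  qed
  have b: "\<forall>k\<in>{1..n}. - S j \<le> - S k"
    using min_lemma[OF assms(1,2,4,3) assms(5)[symmetric] hp eq2] by simp
  show ?thesis
  proof
    show "S i = Min (S ` {1..n})" using a assms(3) by (intro Min_eqI[symmetric]) auto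
    show "S j = Max (S ` {1..n})" using b assms(4) by (intro Max_eqI[symmetric]) auto
  qed
qed

end
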